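(* Let $T_0<T_f<T_i$. Let $\xi=\xi_{T_0}$ be the coefficient of the Neumann solution of problem (P1) with datum $T_0$. Then $$\operatorname{erf}\Big(\xi\sqrt{\tfrac{\alpha_\ell}{\alpha_s}}\Big)<\frac{k_s}{k_\ell}\sqrt{\frac{\alpha_\ell}{\alpha_s}}\;\frac{T_f-T_0}{T_i-T_f}.$$
   Context: Physical constants: density $\rho>0$, specific heats $c_s,c_\ell>0$, thermal conductivities $k_s,k_\ell>0$, latent heat $\ell>0$. Diffusivities are $\alpha_s=k_s/(\rho c_s)$ and $\alpha_\ell=k_\ell/(\rho c_\ell)$, and $b=\alpha_\ell/\alpha_s$. The error functions are $\operatorname{erf}(x)=\frac2{\sqrt\pi}\int_0^xe^{-u^2}du$ and $\operatorname{erfc}=1-\operatorname{erf}$. Set $F_1(x)=e^{-x^2}/\operatorname{erfc}(x)$ and $F_2(x)=e^{-x^2}/\operatorname{erf}(x)$. Problem (P1): find $s(t)$ and temperatures $T_s$ (on $0<x<s(t)$) and $T_\ell$ (on $x>s(t)$) such that: - $\rho c_sT_{s,t}=k_sT_{s,xx}$ and $\rho c_\ell T_{\ell,t}=k_\ell T_{\ell,xx}$; - $s(0)=0$; - $T_\ell(x,0)=T_\ell(+\infty,t)=T_i>T_f$; - $T_s(s(t),t)=T_\ell(s(t),t)=T_f$; - $k_sT_{s,x}(s(t),t)-k_\ell T_{\ell,x}(s(t),t)=\rho\ell\dot s(t)$; - $T_s(0,t)=T_0<T_f$. Its Neumann solution has free boundary $s(t)=2\xi\sqrt{\alpha_\ell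 t}$. Here $\xi>0$ is the unique positive solution of $G(x)=x$, where $G(x)=b_4F_2(\sqrt bx)-b_3F_1(x)$, $b_3=\frac{c_\ell(T_i-T_f)}{\ell\sqrt\pi}$ and $b_4=\frac{k_s(T_f-T_0)}{\rho\ell\sqrt{\pi\alpha_s\alpha_\ell}}$. *)

theory Defs
  imports "HOL-Analysis.Analysis"
begin

definition erf :: "real \<Rightarrow> real" where
  "erf x = 2 / sqrt pi * integral {0..x} (\<lambda>u. exp (- (u\<^sup>2)))"

definition erfc :: "real \<Rightarrow> real" where
  "erfc x = 1 - erf x"

definition F1 :: "real \<Rightarrow> real" where
  "F1 x = exp (- (x\<^sup>2)) / erfc x"

definition F2 :: "real \<Rightarrow> real" where
  "F2 x = exp (- (x\<^sup>2)) / erf x"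

text \<open>The function G whose unique positive fixed point is the Neumann coefficient xi of (P1).
  Parameters: rho, c_s, c_l, k_s, k_l, latent heat l, temperatures T0, Tf, Ti.\<close>
definition G_neumann :: "real \<Rightarrow> real \<Rightarrow> real \<Rightarrow> real \<Rightarrow> real \<Rightarrow> real \<Rightarrow> real \<Rightarrow> real \<Rightarrow> real \<Rightarrow> real \<Rightarrow> real" where
  "G_neumann \<rho> cs cl ks kl l T0 Tf Ti x =
     (let \<alpha>s = ks / (\<rho> * cs); \<alpha>l = kl / (\<rho> * cl); b = \<alpha>l / \<alpha>s;
          b3 = cl * (Ti - Tf) / (l * sqrt pi);
          b4 = ks * (Tf - T0) / (\<rho> * l * sqrt (pi * \<alpha>s * \<alpha>l))
      in b4 * F2 (sqrt b * x) - b3 * F1 x)"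

end

theory Submission imports Defs "HOL-Probability.Distributions" begin

lemma gauss0: "((\<lambda>u. exp (- (u\<^sup>2))) has_integral (sqrt pi / 2)) {0::real..}"
proof -
  have h: "has_bochner_integral lborel (\<lambda>x. indicator {0..} x *\<^sub>R exp (- x\<^sup>2)) (sqrt pi / 2)"
    by (rule gaussian_moment_0)
  have "((\<lambda>x::real. indicator {0..} x *\<^sub>R exp (- x\<^sup>2)) has_integral (sqrt pi / 2)) UNIV"
    using has_integral_integral_lborel[OF integrable.intros[OF h]]
    unfolding has_bochner_integral_integral_eq[OF h] .
  moreover have "(\<lambda>x::real. indicator {0..} x *\<^sub>R exp (- x\<^sup>2)) = (\<lambda>x. if x \<in> {0..} then exp (- x\<^sup>2) else 0)"
    by (auto simp: indicator_def)
  ultimately show ?thesis using has_integral_restrict_UNIV[of "{0::real..}" "\<lambda>u. exp (- (u\<^sup>2))"] by simp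
qed

lemma tail:
  fixes x :: real assumes x: "x \<ge> 0"
  obtains T where "((\<lambda>u. exp (- (u\<^sup>2))) has_integral T) {x..}" "T \<le> exp (- x\<^sup>2) * (sqrt pi / 2)"
proof -
  have h: "has_bochner_integral lborel (\<lambda>u. indicator {0..} u *\<^sub>R exp (- u\<^sup>2)) (sqrt pi / 2)"
    by (rule gaussian_moment_0)
  let ?f = "\<lambda>u::real. indicator {0..} (u - x) *\<^sub>R exp (- (u - x)\<^sup>2)"
  have hf: "has_bochner_integral lborel ?f (sqrt pi / 2)"
    using lborel_has_bochner_integral_real_affine_iff[of 1 ?f "sqrt pi / 2" x] h by simp
  let ?Q = "\<lambda>u::real. indicator {x..} u *\<^sub>R exp (- u\<^sup>2)"
  have bnd: "norm (?Q u) \<le> exp (- x\<^sup>2) * ?f u" for u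
  proof (cases "x \<le> u")
    case True
    have "u\<^sup>2 \<ge> x\<^sup>2 + (u - x)\<^sup>2" using True x mult_right_mono[OF True x] by (simp add: power2_eq_square algebra_simps)
    then have "exp (- u\<^sup>2) \<le> exp (- x\<^sup>2 + - (u-x)\<^sup>2)" by simp
    also have "exp (- x\<^sup>2 + - (u-x)\<^sup>2) = exp (- x\<^sup>2) * exp (- (u-x)\<^sup>2)" by (rule exp_add)
    finally have "exp (- u\<^sup>2) \<le> exp (- x\<^sup>2) * exp (- (u-x)\<^sup>2)" .
    then show ?thesis using True by (simp add: indicator_def)
  qed (auto simp: indicator_def)
  have intf: "integrable lborel (\<lambda>u. exp (- x\<^sup>2) * ?f u)"
    using integrable.intros[OF hf] by simp
  have intQ: "integrable lborel ?Q"
    by (rule Bochner_Integration.integrable_bound[OF intf]) (use bnd in auto)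
  have le: "integral\<^sup>L lborel ?Q \<le> exp (- x\<^sup>2) * (sqrt pi / 2)"
  proof -
    have "integral\<^sup>L lborel ?Q \<le> integral\<^sup>L lborel (\<lambda>u. exp (- x\<^sup>2) * ?f u)"
      by (rule integral_mono[OF intQ intf]) (use bnd in auto)
    also have "\<dots> = exp (- x\<^sup>2) * (sqrt pi / 2)"
      using hf by (simp add: has_bochner_integral_iff)
    finally show ?thesis .
  qed
  have "(?Q has_integral integral\<^sup>L lborel ?Q) UNIV" by (rule has_integral_integral_lborel[OF intQ])
  moreover have "?Q = (\<lambda>u. if u \<in> {x..} then exp (- u\<^sup>2) else 0)"
    by (auto simp: indicator_def)
  ultimately have "((\<lambda>u. exp (- (u\<^sup>2))) has_integral integral\<^sup>L lborel ?Q) {x..}"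
    using has_integral_restrict_UNIV[of "{x..}" "\<lambda>u. exp (- (u\<^sup>2))"] by simp
  with le show ?thesis using that by blast
qed

lemma erfc_facts:
  fixes x :: real assumes x: "x > 0"
  shows "0 < erfc x" "erfc x \<le> exp (- x\<^sup>2)"
proof -
  let ?g = "\<lambda>u::real. exp (- (u\<^sup>2))"
  obtain T where T: "(?g has_integral T) {x..}" "T \<le> exp (- x\<^sup>2) * (sqrt pi / 2)"
    using tail[of x] x by auto
  have cont: "continuous_on A ?g" for A by (intro continuous_intros)
  have gi: "?g integrable_on {a..b}" for a b by (rule integrable_continuous_real[OF cont])
  have "(?g has_integral (integral {0..x} ?g + T)) ({0..x} \<union> {x..})"
    by (rule has_integral_Un[OF integrable_integral[OF gi] T(1)])
       (rule negligible_subset[of "{x}"], auto)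
  moreover have "{0..x} \<union> {x..} = {0::real..}" using x by auto
  ultimately have "(?g has_integral (integral {0..x} ?g + T)) {0..}" by simp
  then have sum: "integral {0..x} ?g + T = sqrt pi / 2"
    using gauss0 has_integral_unique by blast
  have sp: "sqrt pi > 0" by simp
  have ec: "erfc x = 2 / sqrt pi * T"
    unfolding erfc_def erf_def using sum sp by (simp add: field_simps)
  have "erfc x \<le> 2 / sqrt pi * (exp (- x\<^sup>2) * (sqrt pi / 2))"
    unfolding ec using T(2) sp by (intro mult_left_mono) auto
  also have "\<dots> = exp (- x\<^sup>2)" using sp by simp
  finally have up: "erfc x \<le> exp (- x\<^sup>2)" .
  have "integral {x..x+1} ?g \<le> integral {x..} ?g"
    by (rule integral_subset_le) (use T(1) gi in auto)
  moreover have "integral {x..} ?g = T" using T(1) by (rule integral_unique)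
  moreover have "integral {x..x+1} (\<lambda>u. exp (- (x+1)\<^sup>2)) \<le> integral {x..x+1} ?g"
  proof (rule integral_le)
      fix u assume u: "u \<in> {x..x+1}"
      then have "u\<^sup>2 \<le> (x+1)\<^sup>2" using x by (intro power_mono) auto
      then show "exp (- (x+1)\<^sup>2) \<le> exp (- u\<^sup>2)" by simp
  qed (auto intro: gi)
  moreover have "integral {x..x+1} (\<lambda>u. exp (- (x+1)\<^sup>2)) = exp (- (x+1)\<^sup>2)" by simp
  ultimately have "T > 0" by (smt (verit) exp_gt_zero)
  then have "0 < erfc x" unfolding ec using sp by simp
  then show "0 < erfc x" "erfc x \<le> exp (- x\<^sup>2)" using up by auto
qed

theorem corollary5:
  fixes \<rho> cs cl ks kl l T0 Tf Ti \<xi> :: real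
  assumes "\<rho> > 0" "cs > 0" "cl > 0" "ks > 0" "kl > 0" "l > 0"
    and "T0 < Tf" "Tf < Ti"
    and "\<xi> > 0" "G_neumann \<rho> cs cl ks kl l T0 Tf Ti \<xi> = \<xi>"
  shows "erf (\<xi> * sqrt ((kl / (\<rho> * cl)) / (ks / (\<rho> * cs))))
         < ks / kl * sqrt ((kl / (\<rho> * cl)) / (ks / (\<rho> * cs))) * ((Tf - T0) / (Ti - Tf))"
proof -
  define as where "as = ks / (\<rho> * cs)"
  define al where "al = kl / (\<rho> * cl)"
  define b3 where "b3 = cl * (Ti - Tf) / (l * sqrt pi)"
  define b4 where "b4 = ks * (Tf - T0) / (\<rho> * l * sqrt (pi * as * al))"
  define y where "y = sqrt (al / as) * \<xi>"
  have as: "as > 0" and al: "al > 0" using assms by (auto simp: as_def al_def)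
  have b3: "b3 > 0" using assms by (auto simp: b3_def)
  have b4: "b4 > 0" using assms as al by (auto simp: b4_def)
  have G: "b4 * F2 y - b3 * F1 \<xi> = \<xi>"
    using assms(10) unfolding G_neumann_def Let_def as_def[symmetric] al_def[symmetric]
      b3_def[symmetric] b4_def[symmetric] y_def[symmetric] .
  define sa where "sa = sqrt as"
  define sl where "sl = sqrt al"
  have sa: "sa > 0" "sa\<^sup>2 = as" using as by (auto simp: sa_def)
  have sl: "sl > 0" "sl\<^sup>2 = al" using al by (auto simp: sl_def)
  have ks: "ks = \<rho> * cs * sa\<^sup>2" using sa assms by (simp add: as_def field_simps)
  have kl: "kl = \<rho> * cl * sl\<^sup>2" using sl assms by (simp add: al_def field_simps)
  have sb: "sqrt (al / as) = sl / sa" by (simp add: sa_def sl_def real_sqrt_divide)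
  have sp: "sqrt (pi * as * al) = sqrt pi * sa * sl" by (simp add: sa_def sl_def real_sqrt_mult)
  have spi: "sqrt pi > 0" by simp
  have key: "b4 = b3 * (ks / kl * sqrt (al / as) * ((Tf - T0) / (Ti - Tf)))"
  proof -
    have p: "\<rho> > 0" "cl > 0" "l > 0" "Ti - Tf \<noteq> 0" using assms by auto
    show ?thesis unfolding b4_def b3_def sp sb kl using sa(1) sl(1) p spi
      by (simp add: field_simps power2_eq_square)
  qed
  have F1: "F1 \<xi> \<ge> 1"
    using erfc_facts[OF assms(9)] by (simp add: F1_def)
  have rhs: "ks / kl * sqrt (al / as) * ((Tf - T0) / (Ti - Tf)) = b4 / b3"
    using key b3 by simp
  have "erf y < b4 / b3"
  proof (cases "erf y > 0")
    case False then show ?thesis using b3 b4 by (smt (verit) divide_pos_pos)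
  next
    case True
    have "b4 * (exp (- y\<^sup>2) / erf y) = \<xi> + b3 * F1 \<xi>" using G by (simp add: F2_def)
    then have "b4 * exp (- y\<^sup>2) = erf y * (\<xi> + b3 * F1 \<xi>)" using True by (simp add: field_simps)
    moreover have "b3 * 1 \<le> b3 * F1 \<xi>" using F1 b3 by (intro mult_left_mono) auto
    then have "b3 < \<xi> + b3 * F1 \<xi>" using assms(9) by simp
    then have "erf y * (\<xi> + b3 * F1 \<xi>) > erf y * b3"
      using True by (intro mult_strict_left_mono) auto
    moreover have "exp (- y\<^sup>2) \<le> 1" by simp
    ultimately have "erf y * b3 < b4" using b4 by (smt (verit) mult_left_mono mult_right_le_one_le)
    then show ?thesis using b3 by (simp add: field_simps)
  qed
  then show ?thesis unfolding y_def rhs[unfolded al_def as_def] by (simp add: al_def as_def mult.commute)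
qed

end
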